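(* Let $\mathbf{k}$ be a commutative ring, $n\ge0$, $\mathcal{A}=\mathbf{k}[S_n]$. For every $w\in S_n$, \[\mathbf{B}_{\operatorname{LRM}'(w)}\,w = w + (\text{a }\mathbf{k}\text{-linear combination of permutations that are lexicographically smaller than } w).\]
   Context: $S_n$ is the symmetric group on $[n]=\{1,\dots,n\}$, with product $(uw)(i)=u(w(i))$. $\operatorname{Des}(u)=\{i\in[n-1]:u(i)>u(i+1)\}$; for $I\subseteq[n-1]$, $\mathbf{B}_I=\sum_{u\in S_n,\ \operatorname{Des}(u)\subseteq I}u$. $\operatorname{LRM}(w)=\{i\in[n]: w(k)>i \text{ for all } k<w^{-1}(i)\}$ (left-to-right minima), and $\operatorname{LRM}'(w)=\{\ell-1:\ell\in\operatorname{LRM}(w),\ \ell>1\}\subseteq[n-1]$. Lexicographic order on $S_n$ compares one-line notations $(\sigma(1),\dots,\sigma(n))$ lexicographically. *)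

theory Defs
  imports "HOL-Combinatorics.Permutations"
begin

text \<open>Permutations of [n] = {1..n}, as functions nat => nat fixing everything outside {1..n}.
  Product (u w)(i) = u (w i), i.e. composition u o w.\<close>

definition perms :: "nat \<Rightarrow> (nat \<Rightarrow> nat) set" where
  "perms n = {\<sigma>. \<sigma> permutes {1..n}}"

text \<open>The group algebra k[S_n]: functions perms n -> k (coefficient vectors),
  extended by 0 outside perms n.\<close>

definition of_perm :: "(nat \<Rightarrow> nat) \<Rightarrow> ((nat \<Rightarrow> nat) \<Rightarrow> 'k::comm_ring_1)" where
  "of_perm w = (\<lambda>\<sigma>. if \<sigma> = w then 1 else 0)"

definition ga_mult :: "nat \<Rightarrow> ((nat \<Rightarrow> nat) \<Rightarrow> 'k::comm_ring_1) \<Rightarrow> ((nat \<Rightarrow> nat) \<Rightarrow> 'k)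
    \<Rightarrow> ((nat \<Rightarrow> nat) \<Rightarrow> 'k)" where
  "ga_mult n x y = (\<lambda>\<sigma>. \<Sum>p\<in>{(u, v). u \<in> perms n \<and> v \<in> perms n \<and> u \<circ> v = \<sigma>}.
                          x (fst p) * y (snd p))"

definition Des :: "nat \<Rightarrow> (nat \<Rightarrow> nat) \<Rightarrow> nat set" where
  "Des n u = {i \<in> {1..n-1}. u i > u (i + 1)}"

definition B :: "nat \<Rightarrow> nat set \<Rightarrow> ((nat \<Rightarrow> nat) \<Rightarrow> 'k::comm_ring_1)" where
  "B n I = (\<lambda>u. if u \<in> perms n \<and> Des n u \<subseteq> I then 1 else 0)"

definition LRM :: "nat \<Rightarrow> (nat \<Rightarrow> nat) \<Rightarrow> nat set" where
  "LRM n w = {i \<in> {1..n}. \<forall>k. 1 \<le> k \<and> k < inv w i \<longrightarrow> w k > i}"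

definition LRM' :: "nat \<Rightarrow> (nat \<Rightarrow> nat) \<Rightarrow> nat set" where
  "LRM' n w = {l - 1 | l. l \<in> LRM n w \<and> l > 1}"

definition lex_less :: "nat \<Rightarrow> (nat \<Rightarrow> nat) \<Rightarrow> (nat \<Rightarrow> nat) \<Rightarrow> bool" where
  "lex_less n \<sigma> \<tau> \<longleftrightarrow> (\<exists>i\<in>{1..n}. (\<forall>j\<in>{1..<i}. \<sigma> j = \<tau> j) \<and> \<sigma> i < \<tau> i)"

end

theory Submission
  imports Defs
begin

lemma key:
  assumes w: "w permutes {1..n}" and u: "u permutes {1..n}"
    and D: "Des n u \<subseteq> LRM' n w" and ne: "u \<noteq> id"
  shows "lex_less n (u \<circ> w) w"
proof -
  have winv: "\<And>y. w (inv w y) = y" using w permutes_inverses(1) by fast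
  have invw: "\<And>p. inv w (w p) = p" using w permutes_inverses(2) by fast
  have wr: "\<And>p. p \<in> {1..n} \<Longrightarrow> w p \<in> {1..n}" using w permutes_in_image by metis
  have ur: "\<And>p. p \<in> {1..n} \<Longrightarrow> u p \<in> {1..n}" using u permutes_in_image by metis
  have wout: "\<And>p. p \<notin> {1..n} \<Longrightarrow> w p = p" using w permutes_not_in by metis
  have uout: "\<And>p. p \<notin> {1..n} \<Longrightarrow> u p = p" using u permutes_not_in by metis
  have uinj: "\<And>a b. u a = u b \<Longrightarrow> a = b" using u permutes_inj injD by metis
  have invr: "\<And>y. y \<in> {1..n} \<Longrightarrow> inv w y \<in> {1..n}"
    by (metis wout winv)
  define P where "P p \<longleftrightarrow> p \<in> {1..n} \<and> u (w p) \<noteq> w p" for p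
  have exP: "\<exists>p. P p"
  proof (rule ccontr)
    assume "\<not> (\<exists>p. P p)"
    then have "\<And>y. u y = y"
      by (metis P_def uout winv invr)
    then show False using ne by auto
  qed
  define i where "i = (LEAST p. P p)"
  have Pi: "P i" unfolding i_def using exP LeastI_ex by metis
  have before: "\<And>j. j < i \<Longrightarrow> 1 \<le> j \<Longrightarrow> u (w j) = w j"
  proof -
    fix j assume "j < i" "1 \<le> j"
    then have "\<not> P j" unfolding i_def using not_less_Least by blast
    moreover have "j \<in> {1..n}" using Pi \<open>j < i\<close> \<open>1 \<le> j\<close> unfolding P_def by auto
    ultimately show "u (w j) = w j" unfolding P_def by auto
  qed
  have i1: "i \<in> {1..n}" using Pi P_def by auto
  define M where "M = Min (insert (Suc n) (w ` {1..<i}))"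
  have F1: "\<And>j. j \<in> {1..<i} \<Longrightarrow> M \<le> w j" unfolding M_def by (rule Min_le) auto
  have F2: "M \<le> Suc n" unfolding M_def by (rule Min_le) auto
  have Min_in: "M \<in> insert (Suc n) (w ` {1..<i})" unfolding M_def by (rule Min_in) auto
  have M1: "1 \<le> M"
  proof -
    have "\<forall>z\<in>insert (Suc n) (w ` {1..<i}). 1 \<le> z"
      using wr i1 by fastforce
    then show ?thesis using Min_in by blast
  qed
  have F3: "M \<le> n \<Longrightarrow> \<exists>j\<in>{1..<i}. w j = M" using Min_in by auto
  have LRMfact: "\<And>y. y \<in> LRM n w \<Longrightarrow> i \<le> inv w y \<Longrightarrow> y < M"
  proof -
    fix y assume y: "y \<in> LRM n w" "i \<le> inv w y"
    have "\<forall>z\<in>insert (Suc n) (w ` {1..<i}). y < z"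
    proof
      fix z assume "z \<in> insert (Suc n) (w ` {1..<i})"
      then show "y < z"
      proof
        assume "z = Suc n" then show ?thesis using y unfolding LRM_def by auto
      next
        assume "z \<in> w ` {1..<i}"
        then obtain j where "j \<in> {1..<i}" "z = w j" by auto
        then show ?thesis using y unfolding LRM_def by auto
      qed
    qed
    then show "y < M" using Min_in by blast
  qed
  have fixL: "\<And>y. y \<in> LRM n w \<Longrightarrow> M \<le> y \<Longrightarrow> u y = y"
  proof -
    fix y assume y: "y \<in> LRM n w" "M \<le> y"
    then have "inv w y < i" using LRMfact by (meson not_le)
    moreover have "1 \<le> inv w y" using invr y unfolding LRM_def by auto
    ultimately show "u y = y" using before winv by metis
  qed
  have notDes: "\<And>y. y \<in> Des n u \<Longrightarrow> Suc y \<in> LRM n w"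
  proof -
    fix y assume "y \<in> Des n u"
    then have "y \<in> LRM' n w" using D by auto
    then obtain l where "y = l - 1" "l \<in> LRM n w" "l > 1" unfolding LRM'_def by auto
    then show "Suc y \<in> LRM n w" by (simp add: Suc_diff_1)
  qed
  have G: "\<And>y. M \<le> y \<Longrightarrow> y \<le> n \<Longrightarrow> y \<le> u y"
  proof -
    fix y assume y: "M \<le> y" "y \<le> n"
    show "y \<le> u y" using y(1)
    proof (induction rule: dec_induct)
      case base
      then show ?case using F3 y before by fastforce
    next
      case (step m)
      show ?case
      proof (cases "Suc m \<in> LRM n w")
        case True then show ?thesis using fixL step by simp
      next
        case False
        have "m \<notin> Des n u" using False notDes by blast
        moreover have "m \<in> {1..n-1}" using step M1 y by auto
        ultimately have "\<not> u m > u (m+1)" unfolding Des_def by auto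
        moreover have "u m \<noteq> u (m+1)" using uinj by force
        ultimately show ?thesis using step by simp
      qed
    qed
  qed
  have Fix: "\<And>y. y \<in> {M..n} \<Longrightarrow> u y = y"
  proof (rule ccontr)
    fix y0 assume y0: "y0 \<in> {M..n}" "u y0 \<noteq> y0"
    define S where "S = {y \<in> {M..n}. u y \<noteq> y}"
    have Sne: "S \<noteq> {}" using y0 unfolding S_def by blast
    have Sfin: "finite S" unfolding S_def by simp
    define y where "y = Max S"
    have yS: "y \<in> S" using Sne Sfin y_def Max_in by blast
    have ymax: "\<And>z. z \<in> S \<Longrightarrow> z \<le> y" using Sfin y_def by simp
    have yM: "M \<le> y" "y \<le> n" "u y \<noteq> y" using yS unfolding S_def by auto
    have "y \<le> u y" using G yM by blast
    then have yl: "y < u y" using yM by linarith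
    have "y \<in> {1..n}" using yM M1 by auto
    then have "u y \<le> n" using ur by auto
    then have "u y \<notin> S" using ymax yl by (meson leD)
    then have "u (u y) = u y" using yM \<open>u y \<le> n\<close> yl unfolding S_def by auto
    then show False using uinj yM by blast
  qed
  have Less: "\<And>z. z < M \<Longrightarrow> u z < M"
  proof (rule ccontr)
    fix z assume z: "z < M" "\<not> u z < M"
    show False
    proof (cases "z \<in> {1..n}")
      case True
      then have "u z \<in> {M..n}" using ur z by auto
      then have "u (u z) = u z" using Fix by blast
      then show False using uinj z by metis
    next
      case False then show False using uout z by auto
    qed
  qed
  define x where "x = w i"
  have x1: "x \<in> {1..n}" using wr i1 x_def by auto
  have ux: "u x \<noteq> x" using Pi P_def x_def by auto
  have xM: "x < M" using Fix x1 ux by (meson atLeastAtMost_iff not_le)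
  have H: "u x \<le> x"
  proof -
    have "x \<le> M - 1" using xM by simp
    then show ?thesis
    proof (induction rule: inc_induct)
      case base
      then show ?case using Less[of "M - 1"] M1 by simp
    next
      case (step m)
      have "Suc m \<notin> LRM n w"
      proof
        assume L: "Suc m \<in> LRM n w"
        have "Suc m \<in> {1..n}" using L LRM_def by auto
        consider "inv w (Suc m) < i" | "inv w (Suc m) = i" | "inv w (Suc m) > i" by linarith
        then show False
        proof cases
          case 1
          have "1 \<le> inv w (Suc m)" using invr \<open>Suc m \<in> {1..n}\<close> by auto
          then have "M \<le> Suc m" using F1 1 winv by (metis atLeastLessThan_iff)
          then show False using step by simp
        next
          case 2 then show False using winv x_def step by (metis not_less_eq_eq order_refl)
        next
          case 3
          then have "w i > Suc m" using L i1 unfolding LRM_def by auto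
          then show False using x_def step by simp
        qed
      qed
      then have "m \<notin> Des n u" using notDes by blast
      moreover have "m \<in> {1..n-1}" using step x1 F2 by auto
      ultimately have "\<not> u m > u (m+1)" unfolding Des_def by auto
      moreover have "u m \<noteq> u (m+1)" using uinj by force
      ultimately show ?case using step by simp
    qed
  qed
  have "u (w i) < w i" using H ux x_def by simp
  then show ?thesis unfolding lex_less_def using i1 before
    by (intro bexI[of _ i]) auto
qed


lemma prod_eq:
  assumes w: "w \<in> perms n"
  shows "ga_mult n (B n I) (of_perm w) \<sigma> =
    (if \<sigma> \<circ> inv w \<in> perms n \<and> Des n (\<sigma> \<circ> inv w) \<subseteq> I then (1::'k::comm_ring_1) else 0)"
proof -
  have wp: "w permutes {1..n}" using w perms_def by auto
  have iw: "inv w \<circ> w = id" using permutes_inv_o(2)[OF wp] .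
  have wi: "w \<circ> inv w = id" using permutes_inv_o(1)[OF wp] .
  define S where "S = {(u, v). u \<in> perms n \<and> v \<in> perms n \<and> u \<circ> v = \<sigma>}"
  have fin: "finite S"
  proof (rule finite_subset)
    show "S \<subseteq> perms n \<times> perms n" unfolding S_def by auto
    show "finite (perms n \<times> perms n)" unfolding perms_def
      using finite_permutations[of "{1..n}"] by auto
  qed
  have eq: "\<And>p. p \<in> S \<Longrightarrow> (B n I (fst p) * of_perm w (snd p) :: 'k) =
      (if p = (\<sigma> \<circ> inv w, w) then B n I (\<sigma> \<circ> inv w) else 0)"
  proof -
    fix p assume "p \<in> S"
    then obtain u v where p: "p = (u, v)" "u \<circ> v = \<sigma>" unfolding S_def by auto
    show "?thesis p"
    proof (cases "v = w")
      case True
      have "\<sigma> \<circ> inv w = (u \<circ> w) \<circ> inv w" using p(2) True by simp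
      also have "\<dots> = u \<circ> (w \<circ> inv w)" by (rule comp_assoc)
      also have "\<dots> = u" using wi by simp
      finally have "u = \<sigma> \<circ> inv w" by simp
      then show ?thesis using p True by (simp add: of_perm_def)
    next
      case False then show ?thesis using p by (simp add: of_perm_def)
    qed
  qed
  have "ga_mult n (B n I) (of_perm w) \<sigma> = (\<Sum>p\<in>S. B n I (fst p) * of_perm w (snd p) :: 'k)"
    unfolding ga_mult_def S_def by simp
  also have "\<dots> = (\<Sum>p\<in>S. if p = (\<sigma> \<circ> inv w, w) then B n I (\<sigma> \<circ> inv w) else 0)"
    using eq by (rule sum.cong[OF refl])
  also have "\<dots> = (if (\<sigma> \<circ> inv w, w) \<in> S then B n I (\<sigma> \<circ> inv w) else 0)"
    by (rule sum.delta[OF fin])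
  also have "\<dots> = (if \<sigma> \<circ> inv w \<in> perms n \<and> Des n (\<sigma> \<circ> inv w) \<subseteq> I then 1 else 0)"
    unfolding S_def B_def using w iw by (auto simp: comp_assoc)
  finally show ?thesis .
qed

theorem corollary3p5:
  fixes n :: nat and w :: "nat \<Rightarrow> nat"
  assumes "w \<in> perms n"
  shows "\<exists>c :: (nat \<Rightarrow> nat) \<Rightarrow> 'k::comm_ring_1.
           ga_mult n (B n (LRM' n w)) (of_perm w) =
           (\<lambda>\<sigma>. of_perm w \<sigma> +
                 (\<Sum>v\<in>{v \<in> perms n. lex_less n v w}. c v * of_perm v \<sigma>))"
proof (intro exI ext)
  fix \<sigma> :: "nat \<Rightarrow> nat"
  define c where "c = (ga_mult n (B n (LRM' n w)) (of_perm w) :: _ \<Rightarrow> 'k)"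
  define V where "V = {v \<in> perms n. lex_less n v w}"
  have wp: "w permutes {1..n}" using assms perms_def by auto
  have iw: "inv w \<circ> w = id" using permutes_inv_o(2)[OF wp] .
  have wi: "w \<circ> inv w = id" using permutes_inv_o(1)[OF wp] .
  have finV: "finite V" unfolding V_def perms_def
    using finite_permutations[of "{1..n}"] by auto
  have "(\<Sum>v\<in>V. c v * of_perm v \<sigma>) = (\<Sum>v\<in>V. if \<sigma> = v then c v else 0)"
    by (rule sum.cong) (auto simp: of_perm_def)
  also have "\<dots> = (if \<sigma> \<in> V then c \<sigma> else 0)" by (rule sum.delta'[OF finV])
  finally have R: "(\<Sum>v\<in>V. c v * of_perm v \<sigma>) = (if \<sigma> \<in> V then c \<sigma> else 0)" .
  have hc: "c \<sigma> = (if \<sigma> \<circ> inv w \<in> perms n \<and> Des n (\<sigma> \<circ> inv w) \<subseteq> LRM' n w then 1 else 0)"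
    unfolding c_def by (rule prod_eq[OF assms])
  have notww: "\<not> lex_less n w w" unfolding lex_less_def by auto
  show "c \<sigma> = of_perm w \<sigma> + (\<Sum>v\<in>{v \<in> perms n. lex_less n v w}. c v * of_perm v \<sigma>)"
    unfolding V_def[symmetric] R
  proof (cases "\<sigma> = w")
    case True
    have "Des n id = {}" unfolding Des_def by auto
    moreover have "id \<in> perms n" unfolding perms_def by (simp add: permutes_id)
    moreover have "\<sigma> \<circ> inv w = id" using True wi by simp
    ultimately have "c \<sigma> = 1" unfolding hc by simp
    then show "c \<sigma> = of_perm w \<sigma> + (if \<sigma> \<in> V then c \<sigma> else 0)"
      using True notww V_def by (simp add: of_perm_def)
  next
    case False
    show "c \<sigma> = of_perm w \<sigma> + (if \<sigma> \<in> V then c \<sigma> else 0)"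
    proof (cases "\<sigma> \<in> V")
      case True then show ?thesis using False by (simp add: of_perm_def)
    next
      case nV: False
      have "c \<sigma> = 0"
      proof (rule ccontr)
        assume "c \<sigma> \<noteq> 0"
        then have hh: "\<sigma> \<circ> inv w \<in> perms n \<and> Des n (\<sigma> \<circ> inv w) \<subseteq> LRM' n w"
          using hc by (cases "\<sigma> \<circ> inv w \<in> perms n \<and> Des n (\<sigma> \<circ> inv w) \<subseteq> LRM' n w") auto
        then have h: "\<sigma> \<circ> inv w \<in> perms n" "Des n (\<sigma> \<circ> inv w) \<subseteq> LRM' n w" by auto
        have up: "\<sigma> \<circ> inv w permutes {1..n}" using h perms_def by auto
        have sig: "(\<sigma> \<circ> inv w) \<circ> w = \<sigma>" using iw by (simp add: comp_assoc)
        have "\<sigma> \<circ> inv w \<noteq> id"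
        proof
          assume "\<sigma> \<circ> inv w = id"
          then have "\<sigma> = w" using sig by (metis id_comp)
          then show False using False by blast
        qed
        then have "lex_less n \<sigma> w" using key[OF wp up h(2)] sig by simp
        moreover have "\<sigma> permutes {1..n}" using permutes_compose[OF wp up] sig by simp
        ultimately show False using nV unfolding V_def perms_def by blast
      qed
      then show ?thesis using nV False by (simp add: of_perm_def)
    qed
  qed
qed

end
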